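(* Let $d\ge1$ and $1\le p\le q\le\infty$. Then the operator $$R_1f_0(r)=\chi_{[2,\infty)}(r)\sup_{t\in[1,2],\ t\le r/2}\int_{r-t}^{r+t}|f_0(s)|\,ds$$ is bounded from $L^p(\mu_d)$ to $L^q(\mu_d)$.
   Context: $\mu_d$ is the measure on $\mathbb{R}^+$ with $d\mu_d=r^{d-1}dr$. *)

theory Defs
  imports "HOL-Analysis.Analysis"
begin

definition mu :: "nat \<Rightarrow> real measure" where
  "mu d = density (restrict_space lborel {0<..}) (\<lambda>r. ennreal (r ^ (d - 1)))"

text \<open>L^p (quasi)norm of a nonnegative (ennreal-valued) function, p in [1,inf];
  value inf means the function is not in L^p.\<close>
definition lpnorm :: "'a measure \<Rightarrow> ennreal \<Rightarrow> ('a \<Rightarrow> ennreal) \<Rightarrow> ennreal" where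
  "lpnorm M p g =
     (if p = \<infinity> then Inf {c. AE x in M. g x \<le> c}
      else (let I = (\<integral>\<^sup>+ x. (if g x = \<infinity> then \<infinity> else ennreal (enn2real (g x) powr enn2real p)) \<partial>M)
            in if I = \<infinity> then \<infinity> else ennreal (enn2real I powr (1 / enn2real p))))"

definition R1 :: "(real \<Rightarrow> real) \<Rightarrow> real \<Rightarrow> ennreal" where
  "R1 f r = (if r \<ge> 2 then
       Sup ((\<lambda>t. \<integral>\<^sup>+ s. ennreal \<bar>f s\<bar> * indicator {r - t .. r + t} s \<partial>lborel)
              ` {t. 1 \<le> t \<and> t \<le> 2 \<and> t \<le> r / 2})
     else 0)"

end

theory Submission
  imports Defs
begin

lemma mu_nn_integral:
  assumes g: "g \<in> borel_measurable lborel"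
  shows "(\<integral>\<^sup>+ x. g x \<partial>mu d) = (\<integral>\<^sup>+ x. ennreal (x ^ (d - 1)) * g x * indicator {0<..} x \<partial>lborel)"
  unfolding mu_def
  apply (subst nn_integral_density)
    apply (rule measurable_restrict_space1) apply measurable
   apply (rule measurable_restrict_space1) using g apply simp
  apply (subst nn_integral_restrict_space) apply simp
  apply (simp add: mult.assoc)
  done

lemma mu_AE:
  "(AE x in mu d. P x) \<longleftrightarrow> (AE x in lborel. 0 < x \<longrightarrow> P x)"
  unfolding mu_def
  apply (subst AE_density)
   apply (rule measurable_restrict_space1) apply measurable
  apply (subst AE_restrict_space_iff) apply simp
  apply (rule AE_cong) apply auto
  done

lemma space_mu[simp]: "space (mu d) = {0<..}"
  unfolding mu_def by (simp add: space_restrict_space)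

lemma real_ineq:
  fixes x e P :: real
  assumes "0 \<le> x" "0 < e" "1 \<le> P"
  shows "x \<le> e + e powr (1 - P) * x powr P"
proof (cases "x \<le> e")
  case True
  then show ?thesis by (simp add: add_increasing2)
next
  case False
  then have xp: "x > 0" using assms by auto
  have "e powr (1 - P) * x powr P = x * (x / e) powr (P - 1)"
    using xp assms by (simp add: powr_divide powr_diff field_simps powr_add)
  also have "\<dots> \<ge> x * 1"
    using False assms xp by (intro mult_left_mono ge_one_powr_ge_zero) auto
  finally show ?thesis using assms by simp
qed

lemma powr_split_ineq:
  fixes h M P Q :: real
  assumes "0 \<le> h" "h \<le> M" "P \<le> Q" "0 < P"
  shows "h powr Q \<le> M powr (Q - P) * h powr P"
proof (cases "h = 0")
  case True then show ?thesis by simp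
next
  case False
  then have "h > 0" using assms by auto
  have "h powr Q = h powr (Q - P) * h powr P" by (simp add: powr_add[symmetric])
  also have "\<dots> \<le> M powr (Q - P) * h powr P"
    using assms \<open>h > 0\<close> by (intro mult_right_mono powr_mono2) auto
  finally show ?thesis .
qed


lemma int_bound:
  fixes g :: "real \<Rightarrow> real" and a b P :: real
  assumes gm: "g \<in> borel_measurable borel" and g0: "\<And>s. 0 \<le> g s" and P: "1 \<le> P"
    and ab: "a \<le> b" "b - a \<le> 4"
    and Afin: "(\<integral>\<^sup>+ s. ennreal (g s powr P) * indicator {a..b} s \<partial>lborel) < \<infinity>"
  shows "(\<integral>\<^sup>+ s. ennreal (g s) * indicator {a..b} s \<partial>lborel)
     \<le> 5 * ennreal (enn2real (\<integral>\<^sup>+ s. ennreal (g s powr P) * indicator {a..b} s \<partial>lborel) powr (1/P))"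
proof -
  define A where "A = (\<integral>\<^sup>+ s. ennreal (g s powr P) * indicator {a..b} s \<partial>lborel)"
  define Ar where "Ar = enn2real A"
  have AAr: "A = ennreal Ar" using Afin unfolding Ar_def A_def by (simp add: less_top)
  have Ar0: "Ar \<ge> 0" unfolding Ar_def by simp
  show ?thesis
  proof (cases "Ar = 0")
    case True
    then have "A = 0" using AAr by simp
    then have "AE s in lborel. ennreal (g s powr P) * indicator {a..b} s = 0"
      unfolding A_def using gm by (subst (asm) nn_integral_0_iff_AE) auto
    then have "AE s in lborel. ennreal (g s) * indicator {a..b} s = 0"
      by eventually_elim (use g0 in \<open>auto simp: indicator_def split: if_splits\<close>)
    then have "(\<integral>\<^sup>+ s. ennreal (g s) * indicator {a..b} s \<partial>lborel) = 0"
      using gm by (subst nn_integral_0_iff_AE) auto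
    then show ?thesis by simp
  next
    case False
    then have Arp: "Ar > 0" using Ar0 by simp
    define e where "e = Ar powr (1/P)"
    have ep: "e > 0" unfolding e_def using Arp by simp
    have eP: "e powr P = Ar" unfolding e_def using Arp P by (simp add: powr_powr)
    have "(\<integral>\<^sup>+ s. ennreal (g s) * indicator {a..b} s \<partial>lborel)
        \<le> (\<integral>\<^sup>+ s. ennreal e * indicator {a..b} s + ennreal (e powr (1 - P)) * (ennreal (g s powr P) * indicator {a..b} s) \<partial>lborel)"
      apply (rule nn_integral_mono)
      using real_ineq[OF g0 ep P] ep
      by (auto simp: indicator_def ennreal_mult[symmetric] ennreal_plus[symmetric] simp del: ennreal_plus intro!: ennreal_leI)
    also have "\<dots> = ennreal e * emeasure lborel {a..b} + ennreal (e powr (1 - P)) * A"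
      unfolding A_def using gm
      by (subst nn_integral_add) (auto simp: nn_integral_cmult)
    also have "\<dots> = ennreal (e * (b - a) + e powr (1 - P) * e powr P)"
      using ab ep AAr eP Ar0 by (simp add: ennreal_mult[symmetric] ennreal_plus[symmetric] del: ennreal_plus)
    also have "e powr (1 - P) * e powr P = e" using ep by (simp add: powr_add[symmetric])
    also have "ennreal (e * (b - a) + e) \<le> ennreal (5 * e)"
      using ab ep mult_left_mono[OF ab(2), of e] by (intro ennreal_leI) simp
    also have "\<dots> = 5 * ennreal (enn2real A powr (1/P))"
      unfolding e_def Ar_def by (simp add: ennreal_mult)
    finally show ?thesis unfolding A_def .
  qed
qed


lemma R1_small: "r < 2 \<Longrightarrow> R1 f r = 0" unfolding R1_def by simp

lemma R1_le:
  assumes "r \<ge> 2"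
  shows "R1 f r \<le> (\<integral>\<^sup>+ s. ennreal \<bar>f s\<bar> * indicator {max (r-2) (r/2) .. r+2} s \<partial>lborel)"
  unfolding R1_def using assms
  apply simp
  apply (rule SUP_least)
  apply (rule nn_integral_mono)
  apply (auto simp: indicator_def)
  done

lemma Inf_mult_bound:
  fixes x :: ennreal and K :: real
  assumes "\<And>c. c \<in> S \<Longrightarrow> x \<le> ennreal K * c" "K > 0"
  shows "x \<le> ennreal K * Inf S"
proof -
  have "x / ennreal K \<le> Inf S"
  proof (rule Inf_greatest)
    fix c assume "c \<in> S"
    then have "x \<le> ennreal K * c" by (rule assms)
    then show "x / ennreal K \<le> c"
      by (simp add: assms(2) divide_le_posI_ennreal)
  qed
  have "x = ennreal K * x / ennreal K" using assms(2)
    by (subst mult.commute) (simp add: mult_divide_eq_ennreal)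
  also have "\<dots> = ennreal K * (x / ennreal K)" by (simp add: ennreal_times_divide)
  also have "\<dots> \<le> ennreal K * Inf S" by (rule mult_left_mono) (fact, simp)
  finally show ?thesis .
qed



lemma final_real_ineq:
  fixes Fr P Q :: real and d :: nat
  assumes "0 \<le> Fr" "1 \<le> P" "P \<le> Q"
  shows "(5 * Fr) powr (Q - P) * 5 powr P * 2 ^ (d + 1) * Fr powr P
         \<le> (5 * 2 ^ (d + 1) * Fr) powr Q"
proof (cases "Fr = 0")
  case True then show ?thesis by simp
next
  case False
  then have Fp: "Fr > 0" using assms by simp
  have "(5 * Fr) powr (Q - P) * 5 powr P * 2 ^ (d + 1) * Fr powr P
      = (5 powr (Q - P) * 5 powr P) * (Fr powr (Q - P) * Fr powr P) * 2 ^ (d + 1)"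
    using Fp by (simp add: powr_mult)
  also have "\<dots> = 5 powr Q * Fr powr Q * 2 ^ (d + 1)"
    using Fp by (simp add: powr_add[symmetric])
  also have "\<dots> \<le> 5 powr Q * Fr powr Q * (2 ^ (d + 1)) powr Q"
  proof -
    have "(2::real) ^ (d + 1) = (2 ^ (d + 1)) powr 1" by simp
    also have "\<dots> \<le> (2 ^ (d + 1)) powr Q"
      using assms one_le_power[of "2::real" "d+1"] by (intro powr_mono) auto
    finally show ?thesis using Fp by (intro mult_left_mono) auto
  qed
  also have "\<dots> = (5 * 2 ^ (d + 1) * Fr) powr Q"
  proof -
    have e1: "(5 * 2 ^ (d + 1) * Fr) powr Q = (5 * 2 ^ (d + 1)) powr Q * Fr powr Q"
      by (rule powr_mult)
    have e2: "(5 * 2 ^ (d + 1) :: real) powr Q = 5 powr Q * (2 ^ (d+1)) powr Q"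
      by (rule powr_mult)
    show ?thesis unfolding e1 e2 by (simp only: ac_simps)
  qed
  finally show ?thesis .
qed



theorem lemma2p2:
  fixes d :: nat and p q :: ennreal
  assumes "d \<ge> 1" and "1 \<le> p" and "p \<le> q"
  shows "\<exists>C::real. C \<ge> 0 \<and>
    (\<forall>f::real \<Rightarrow> real. f \<in> borel_measurable (mu d) \<longrightarrow>
       lpnorm (mu d) p (\<lambda>r. ennreal \<bar>f r\<bar>) < \<infinity> \<longrightarrow>
       lpnorm (mu d) q (R1 f) \<le> ennreal C * lpnorm (mu d) p (\<lambda>r. ennreal \<bar>f r\<bar>))"
proof -
  define C :: real where "C = 5 * 2 ^ (d + 1)"
  have C5: "C \<ge> 5" unfolding C_def using one_le_power[of "2::real" "d+1"] by simp
  show ?thesis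
  proof (intro exI[of _ C] conjI allI impI)
    show "C \<ge> 0" using C5 by simp
    fix f :: "real \<Rightarrow> real"
    assume fm: "f \<in> borel_measurable (mu d)"
      and Ffin: "lpnorm (mu d) p (\<lambda>r. ennreal \<bar>f r\<bar>) < \<infinity>"
    define g where "g s = \<bar>indicator {0<..} s *\<^sub>R f s\<bar>" for s
    have "f \<in> borel_measurable (restrict_space lborel {0<..})"
      using fm unfolding mu_def by simp
    then have "(\<lambda>s. indicator {0<..} s *\<^sub>R f s) \<in> borel_measurable lborel"
      by (subst (asm) borel_measurable_restrict_space_iff) auto
    then have gm[measurable]: "g \<in> borel_measurable borel"
      unfolding g_def by simp
    have g0: "\<And>s. 0 \<le> g s" unfolding g_def by simp
    have gpos: "\<And>s. s > 0 \<Longrightarrow> g s = \<bar>f s\<bar>" unfolding g_def by simp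
    define J where "J r = {max (r-2) (r/2) .. r+2}" for r :: real
    have Jpos: "\<And>r s. r \<ge> 2 \<Longrightarrow> s \<in> J r \<Longrightarrow> s \<ge> 1" unfolding J_def by auto
    have Jlen: "\<And>r. r \<ge> 2 \<Longrightarrow> emeasure lborel (J r) \<le> 4"
    proof -
      fix r :: real assume r: "r \<ge> 2"
      have "emeasure lborel (J r) = ennreal (r + 2 - max (r-2) (r/2))"
        unfolding J_def using r by (intro emeasure_lborel_Icc) auto
      also have "\<dots> \<le> ennreal 4" by (intro ennreal_leI) auto
      finally show "emeasure lborel (J r) \<le> 4" by simp
    qed
    have KR: "R1 f r \<le> (\<integral>\<^sup>+ s. ennreal (g s) * indicator (J r) s \<partial>lborel)" if "r \<ge> 2" for r
    proof -
      have "R1 f r \<le> (\<integral>\<^sup>+ s. ennreal \<bar>f s\<bar> * indicator (J r) s \<partial>lborel)"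
        unfolding J_def by (rule R1_le[OF that])
      also have "\<dots> = (\<integral>\<^sup>+ s. ennreal (g s) * indicator (J r) s \<partial>lborel)"
      proof (rule nn_integral_cong)
        fix s show "ennreal \<bar>f s\<bar> * indicator (J r) s = ennreal (g s) * indicator (J r) s"
        proof (cases "s \<in> J r")
          case True
          then have "s > 0" using Jpos[OF that True] by simp
          then show ?thesis using gpos by simp
        qed simp
      qed
      finally show ?thesis .
    qed
    show "lpnorm (mu d) q (R1 f) \<le> ennreal C * lpnorm (mu d) p (\<lambda>r. ennreal \<bar>f r\<bar>)"
    proof (cases "p = \<infinity>")
      case True
      then have qT: "q = \<infinity>" using assms(3) by (simp add: top_unique)
      have lp: "\<And>h. lpnorm (mu d) \<infinity> h = Inf {c. AE x in mu d. h x \<le> c}"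
        by (simp add: lpnorm_def)
      show ?thesis unfolding True qT lp
      proof (rule Inf_mult_bound)
        show "C > 0" using C5 by simp
        fix c assume "c \<in> {c. AE x in mu d. ennreal \<bar>f x\<bar> \<le> c}"
        then have ae: "AE s in lborel. 0 < s \<longrightarrow> ennreal \<bar>f s\<bar> \<le> c"
          by (simp add: mu_AE)
        have bnd: "R1 f r \<le> 4 * c" for r
        proof (cases "r \<ge> 2")
          case False then show ?thesis by (simp add: R1_small)
        next
          case True
          have "R1 f r \<le> (\<integral>\<^sup>+ s. ennreal (g s) * indicator (J r) s \<partial>lborel)"
            by (rule KR[OF True])
          also have "\<dots> \<le> (\<integral>\<^sup>+ s. c * indicator (J r) s \<partial>lborel)"
          proof (rule nn_integral_mono_AE)
            show "AE s in lborel. ennreal (g s) * indicator (J r) s \<le> c * indicator (J r) s"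
              using ae
            proof eventually_elim
              case (elim s)
              show ?case
              proof (cases "s \<in> J r")
                case True
                then have "s > 0" using Jpos[OF \<open>r \<ge> 2\<close> True] by simp
                then show ?thesis using gpos elim True by simp
              qed simp
            qed
          qed
          also have "\<dots> = c * emeasure lborel (J r)"
            by (simp add: J_def nn_integral_cmult_indicator)
          also have "\<dots> \<le> c * 4" by (rule mult_left_mono[OF Jlen[OF True]]) simp
          finally show ?thesis by (simp add: mult.commute)
        qed
        have "4 * c \<in> {c. AE x in mu d. R1 f x \<le> c}" using bnd by simp
        then have "Inf {c. AE x in mu d. R1 f x \<le> c} \<le> 4 * c" by (rule Inf_lower)
        also have "\<dots> \<le> ennreal C * c"
        proof (rule mult_right_mono)
          show "(4::ennreal) \<le> ennreal C" using C5
            using ennreal_leI[of 4 C] C5 by simp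
        qed simp
        finally show "Inf {c. AE x in mu d. R1 f x \<le> c} \<le> ennreal C * c" .
      qed
    next
      case False
      define P where "P = enn2real p"
      have pP: "p = ennreal P" unfolding P_def using False by (simp add: less_top)
      have P1: "P \<ge> 1"
      proof -
        have "ennreal 1 \<le> ennreal P" using assms(2) pP by simp
        then show ?thesis by (subst (asm) ennreal_le_iff) (auto simp: P_def)
      qed
      define I where "I = (\<integral>\<^sup>+ x. ennreal (\<bar>f x\<bar> powr P) \<partial>mu d)"
      have lpf: "lpnorm (mu d) p (\<lambda>r. ennreal \<bar>f r\<bar>) =
          (if I = \<infinity> then \<infinity> else ennreal (enn2real I powr (1 / P)))"
        unfolding lpnorm_def I_def using False by (simp add: P_def)
      have Ifin: "I \<noteq> \<infinity>" using Ffin unfolding lpf by (auto split: if_splits)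
      define Ir where "Ir = enn2real I"
      have IIr: "I = ennreal Ir" unfolding Ir_def using Ifin by (simp add: less_top)
      have Ir0: "Ir \<ge> 0" unfolding Ir_def by simp
      define Fr where "Fr = Ir powr (1 / P)"
      have Fr0: "Fr \<ge> 0" unfolding Fr_def by simp
      have FFr: "lpnorm (mu d) p (\<lambda>r. ennreal \<bar>f r\<bar>) = ennreal Fr"
        unfolding lpf Fr_def Ir_def using Ifin by simp
      have FrP: "Fr powr P = Ir" unfolding Fr_def using P1 Ir0 by (simp add: powr_powr)
      have Ilb: "I = (\<integral>\<^sup>+ x. ennreal (x^(d-1)) * ennreal (g x powr P) * indicator {0<..} x \<partial>lborel)"
      proof -
        have "I = (\<integral>\<^sup>+ x. ennreal (g x powr P) \<partial>mu d)"
          unfolding I_def by (rule nn_integral_cong) (simp add: gpos)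
        also have "\<dots> = (\<integral>\<^sup>+ x. ennreal (x^(d-1)) * ennreal (g x powr P) * indicator {0<..} x \<partial>lborel)"
          by (rule mu_nn_integral) measurable
        finally show ?thesis .
      qed
      define A where "A r = (\<integral>\<^sup>+ s. ennreal (g s powr P) * indicator (J r) s \<partial>lborel)" for r
      have AI: "A r \<le> I" if r: "r \<ge> 2" for r
        unfolding A_def Ilb
      proof (rule nn_integral_mono)
        fix s
        show "ennreal (g s powr P) * indicator (J r) s
          \<le> ennreal (s ^ (d - 1)) * ennreal (g s powr P) * indicator {0<..} s"
        proof (cases "s \<in> J r")
          case True
          then have s1: "s \<ge> 1" using Jpos[OF r] by simp
          then have "g s powr P \<le> s ^ (d - 1) * g s powr P"
            using one_le_power[OF s1, of "d-1"] by (simp add: mult_le_cancel_right1)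
          then show ?thesis using True s1
            by (simp add: ennreal_mult[symmetric] ennreal_leI)
        qed simp
      qed
      have Afin: "A r < \<infinity>" if "r \<ge> 2" for r
        using AI[OF that] Ifin by (simp add: less_top[symmetric] top_unique) (metis le_less_trans less_top)
      have R1A: "R1 f r \<le> 5 * ennreal (enn2real (A r) powr (1/P))" if r: "r \<ge> 2" for r
      proof -
        have "R1 f r \<le> (\<integral>\<^sup>+ s. ennreal (g s) * indicator (J r) s \<partial>lborel)" by (rule KR[OF r])
        also have "\<dots> \<le> 5 * ennreal (enn2real (A r) powr (1/P))"
          unfolding A_def J_def
          by (rule int_bound[OF gm g0 P1]) (use Afin[OF r] r in \<open>auto simp: A_def J_def\<close>)
        finally show ?thesis .
      qed
      have R1F: "R1 f r \<le> ennreal (5 * Fr)" for r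
      proof (cases "r \<ge> 2")
        case False then show ?thesis by (simp add: R1_small)
      next
        case True
        have "enn2real (A r) \<le> Ir" unfolding Ir_def
          using AI[OF True] Ifin by (intro enn2real_mono) (auto simp: less_top)
        then have Ale: "enn2real (A r) powr (1/P) \<le> Fr" unfolding Fr_def
          using P1 by (intro powr_mono2) auto
        have "5 * ennreal (enn2real (A r) powr (1/P)) \<le> ennreal (5 * Fr)"
        proof -
          have "ennreal (5 * Fr) = 5 * ennreal Fr" using Fr0 by (simp add: ennreal_mult)
          then show ?thesis using Ale
            by (simp add: mult_left_mono ennreal_leI)
        qed
        then show ?thesis using R1A[OF True] by simp
      qed
      show ?thesis
      proof (cases "q = \<infinity>")
        case True
        have "lpnorm (mu d) q (R1 f) = Inf {c. AE x in mu d. R1 f x \<le> c}"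
          using True by (simp add: lpnorm_def)
        also have "\<dots> \<le> ennreal (5 * Fr)"
          by (rule Inf_lower) (simp add: R1F)
        also have "\<dots> \<le> ennreal C * ennreal Fr"
          using C5 Fr0 by (simp add: ennreal_mult[symmetric] mult_right_mono ennreal_leI)
        finally show ?thesis unfolding FFr .
      next
        case qF: False
        define Q where "Q = enn2real q"
        have qQ: "q = ennreal Q" unfolding Q_def using qF by (simp add: less_top)
        have PQ: "P \<le> Q"
        proof -
          have "ennreal P \<le> ennreal Q" using assms(3) pP qQ by simp
          then show ?thesis by (subst (asm) ennreal_le_iff) (auto simp: Q_def)
        qed
        define h where "h r = enn2real (R1 f r)" for r
        have R1h: "R1 f r = ennreal (h r)" for r
        proof -
          have "R1 f r \<noteq> top" using R1F[of r] by (auto simp: top_unique)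
          then show ?thesis unfolding h_def by (simp add: less_top)
        qed
        have h0: "\<And>x. 0 \<le> h x" unfolding h_def by simp
        define JR where "JR = (\<integral>\<^sup>+ x. ennreal (h x powr Q) \<partial>mu d)"
        have lpR: "lpnorm (mu d) q (R1 f) =
          (if JR = \<infinity> then \<infinity> else ennreal (enn2real JR powr (1 / Q)))"
          unfolding lpnorm_def JR_def using qF h0 by (simp add: Q_def R1h Let_def)
        define K0 where "K0 = (5 * Fr) powr (Q - P) * 5 powr P"
        have K00: "K0 \<ge> 0" unfolding K0_def by simp
        have indJ: "indicator (J r) s = (if max (r-2) (r/2) \<le> s \<and> s \<le> r+2 then 1 else (0::ennreal))" for r s
          unfolding J_def by (simp add: indicator_def)
        define G where "G x s = ennreal (x^(d-1)) * indicator {2..} x * (ennreal (g s powr P) * indicator (J x) s)" for x s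
        have Gm: "case_prod G \<in> borel_measurable (lborel \<Otimes>\<^sub>M lborel)"
          unfolding G_def indJ by measurable
        have Gm': "(\<lambda>(s, x). G x s) \<in> borel_measurable (lborel \<Otimes>\<^sub>M lborel)"
          unfolding G_def indJ by measurable
        have Am: "A \<in> borel_measurable lborel"
        proof -
          have "A = (\<lambda>r. \<integral>\<^sup>+ s. ennreal (g s powr P) * indicator (J r) s \<partial>lborel)"
            unfolding A_def by simp
          also have "\<dots> \<in> borel_measurable lborel"
            unfolding indJ by (rule lborel.borel_measurable_nn_integral) measurable
          finally show ?thesis .
        qed
        have Am2[measurable]: "A \<in> borel_measurable borel" using Am by simp
        have step1: "ennreal (h x powr Q) \<le> ennreal K0 * (indicator {2..} x * A x)" for x
        proof (cases "x \<ge> 2")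
          case False
          then have "h x = 0" unfolding h_def by (simp add: R1_small)
          then show ?thesis by simp
        next
          case True
          have Afx: "A x = ennreal (enn2real (A x))" using Afin[OF True] by (simp add: less_top)
          define a where "a = enn2real (A x)"
          have a0: "a \<ge> 0" unfolding a_def by simp
          have "ennreal (h x) \<le> ennreal (5 * Fr)" using R1F[of x] R1h[of x] by simp
          then have hF: "h x \<le> 5 * Fr" using Fr0 by (subst (asm) ennreal_le_iff) auto
          have "ennreal (h x) \<le> 5 * ennreal (a powr (1/P))" using R1A[OF True] R1h[of x] a_def by simp
          also have "\<dots> = ennreal (5 * a powr (1/P))" by (simp add: ennreal_mult)
          finally have ha: "h x \<le> 5 * a powr (1/P)" by (subst (asm) ennreal_le_iff) auto
          have "h x powr Q \<le> (5 * Fr) powr (Q - P) * h x powr P"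
            using h0 hF PQ P1 by (intro powr_split_ineq) auto
          also have "h x powr P \<le> (5 * a powr (1/P)) powr P"
            using ha h0 P1 by (intro powr_mono2) auto
          also have "(5 * a powr (1/P)) powr P = 5 powr P * a"
            using a0 P1 by (simp add: powr_mult powr_powr)
          finally have "h x powr Q \<le> K0 * a" unfolding K0_def
            by (simp add: mult.assoc mult_left_mono)
          then have "ennreal (h x powr Q) \<le> ennreal (K0 * a)" by (rule ennreal_leI)
          also have "\<dots> = ennreal K0 * A x" using K00 a0 Afx a_def by (simp add: ennreal_mult)
          finally show ?thesis using True by simp
        qed
        have "JR \<le> (\<integral>\<^sup>+ x. ennreal K0 * (indicator {2..} x * A x) \<partial>mu d)"
          unfolding JR_def by (rule nn_integral_mono) (rule step1)
        also have "\<dots> = (\<integral>\<^sup>+ x. ennreal (x ^ (d - 1)) * (ennreal K0 * (indicator {2..} x * A x)) * indicator {0<..} x \<partial>lborel)"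
          using Am by (intro mu_nn_integral) measurable
        also have "\<dots> = (\<integral>\<^sup>+ x. ennreal K0 * (\<integral>\<^sup>+ s. G x s \<partial>lborel) \<partial>lborel)"
        proof (rule nn_integral_cong)
          fix x :: real
          have "(\<integral>\<^sup>+ s. G x s \<partial>lborel) = ennreal (x^(d-1)) * indicator {2..} x * A x"
            unfolding G_def A_def by (subst nn_integral_cmult) (auto simp: indJ)
          then show "ennreal (x ^ (d - 1)) * (ennreal K0 * (indicator {2..} x * A x)) * indicator {0<..} x
              = ennreal K0 * (\<integral>\<^sup>+ s. G x s \<partial>lborel)"
            by (auto simp: indicator_def mult_ac)
        qed
        also have "\<dots> = ennreal K0 * (\<integral>\<^sup>+ x. (\<integral>\<^sup>+ s. G x s \<partial>lborel) \<partial>lborel)"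
          using Gm by (intro nn_integral_cmult) (rule lborel.borel_measurable_nn_integral)
        also have "(\<integral>\<^sup>+ x. (\<integral>\<^sup>+ s. G x s \<partial>lborel) \<partial>lborel)
            = (\<integral>\<^sup>+ s. (\<integral>\<^sup>+ x. G x s \<partial>lborel) \<partial>lborel)"
          using Gm' by (intro lborel_pair.Fubini') simp
        also have "\<dots> \<le> (\<integral>\<^sup>+ s. ennreal (2 ^ (d + 1)) * (ennreal (s^(d-1)) * ennreal (g s powr P) * indicator {0<..} s) \<partial>lborel)"
        proof (rule nn_integral_mono)
          fix s :: real
          define c where "c = ennreal (2^(d-1) * s^(d-1)) * ennreal (g s powr P) * indicator {0<..} s"
          have "(\<integral>\<^sup>+ x. G x s \<partial>lborel) \<le> (\<integral>\<^sup>+ x. c * indicator {s-2..s+2} x \<partial>lborel)"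
          proof (rule nn_integral_mono)
            fix x :: real
            show "G x s \<le> c * indicator {s-2..s+2} x"
            proof (cases "x \<ge> 2 \<and> s \<in> J x")
              case True
              then have x2: "x \<ge> 2" and sJ: "max (x-2) (x/2) \<le> s" "s \<le> x + 2" by (auto simp: J_def)
              then have sp: "s > 0" and x2s: "x \<le> 2 * s" and xs: "s - 2 \<le> x" "x \<le> s + 2" by auto
              have "x^(d-1) \<le> (2 * s) ^ (d - 1)" using x2 x2s by (intro power_mono) auto
              also have "\<dots> = 2^(d-1) * s^(d-1)" by (simp add: power_mult_distrib)
              finally have xle: "x^(d-1) \<le> 2^(d-1) * s^(d-1)" .
              have "G x s = ennreal (x^(d-1)) * ennreal (g s powr P)"
                unfolding G_def using True by simp
              also have "\<dots> \<le> ennreal (2^(d-1) * s^(d-1)) * ennreal (g s powr P)"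
                using xle by (intro mult_right_mono ennreal_leI) auto
              also have "\<dots> = c * indicator {s-2..s+2} x"
                unfolding c_def using sp xs by simp
              finally show ?thesis .
            next
              case False
              then have "G x s = 0" unfolding G_def by (auto simp: indicator_def)
              then show ?thesis by simp
            qed
          qed
          also have "\<dots> = c * emeasure lborel {s-2..s+2}"
            by (rule nn_integral_cmult_indicator) simp
          also have "\<dots> = c * 4" by simp
          also have "\<dots> = ennreal (2 ^ (d + 1)) * (ennreal (s^(d-1)) * ennreal (g s powr P) * indicator {0<..} s)"
          proof (cases "s > 0")
            case False then show ?thesis unfolding c_def by simp
          next
            case True
            have dd: "(2::real) ^ (d + 1) = 2^(d-1) * 4"
            proof -
              obtain k where "d = Suc k" using assms(1) by (cases d) auto
              then show ?thesis by simp
            qed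
            have L: "ennreal (2^(d-1) * s^(d-1) * g s powr P * 4) = c * 4"
              unfolding c_def using True by (simp add: ennreal_mult mult_ac)
            have R: "ennreal (2^(d+1) * (s^(d-1) * g s powr P)) =
               ennreal (2 ^ (d + 1)) * (ennreal (s^(d-1)) * ennreal (g s powr P) * indicator {0<..} s)"
              using True by (simp add: ennreal_mult mult_ac)
            have M: "2^(d-1) * s^(d-1) * g s powr P * 4 = 2^(d+1) * (s^(d-1) * g s powr P)"
              unfolding dd by (simp add: mult_ac)
            show ?thesis using L R M by metis
          qed
          finally show "(\<integral>\<^sup>+ x. G x s \<partial>lborel) \<le> ennreal (2 ^ (d + 1)) * (ennreal (s^(d-1)) * ennreal (g s powr P) * indicator {0<..} s)" .
        qed
        also have "\<dots> = ennreal (2 ^ (d + 1)) * I"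
          unfolding Ilb by (rule nn_integral_cmult) measurable
        finally have JR1: "JR \<le> ennreal K0 * (ennreal (2 ^ (d + 1)) * I)"
          by (simp add: mult_left_mono)
        have "ennreal K0 * (ennreal (2 ^ (d + 1)) * I) = ennreal (K0 * 2 ^ (d + 1) * Ir)"
          unfolding IIr using K00 Ir0 by (simp add: ennreal_mult[symmetric] mult.assoc del: ennreal_numeral)
        with JR1 have JRle: "JR \<le> ennreal (K0 * 2 ^ (d + 1) * Ir)" by simp
        have "JR \<le> ennreal ((C * Fr) powr Q)"
          using JRle final_real_ineq[OF Fr0 P1 PQ, of d] FrP
          by (simp add: K0_def C_def) (metis ennreal_leI order_trans)
        then have JRfin: "JR \<noteq> \<infinity>" by (auto simp: top_unique)
        have "enn2real JR \<le> (C * Fr) powr Q"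
          using \<open>JR \<le> ennreal ((C * Fr) powr Q)\<close> by (simp add: enn2real_leI)
        then have "enn2real JR powr (1 / Q) \<le> ((C * Fr) powr Q) powr (1 / Q)"
          using P1 PQ by (intro powr_mono2) auto
        also have "\<dots> = C * Fr" using C5 Fr0 P1 PQ by (simp add: powr_powr)
        finally have "lpnorm (mu d) q (R1 f) \<le> ennreal (C * Fr)"
          unfolding lpR using JRfin by (simp add: ennreal_leI)
        then show ?thesis unfolding FFr using C5 Fr0 by (simp add: ennreal_mult)
      qed
    qed
  qed
qed

end
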